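(* Let $G$ be a profinite group, let $g\in G$, and let $K$ be the closed normal subgroup of $G$ generated by $g$. Then $d(K/[K,K])\le |G:C_G(g)K|$, where $C_G(g)$ is the centralizer of $g$ in $G$.
   Context: $[K,K]$ denotes the closed commutator subgroup of $K$, and $d(\cdot)$ denotes the minimal number of topological generators of a profinite group. *)

theory Defs
  imports "HOL-Analysis.Analysis" "HOL-Algebra.Algebra" "HOL-Library.Extended_Nat"
begin

definition profinite_group :: "('a, 'b) monoid_scheme \<Rightarrow> 'a topology \<Rightarrow> bool" where
  "profinite_group G T \<longleftrightarrow> group G \<and> topspace T = carrier G
     \<and> continuous_map (prod_topology T T) T (\<lambda>(x, y). x \<otimes>\<^bsub>G\<^esub> y)
     \<and> continuous_map T T (\<lambda>x. inv\<^bsub>G\<^esub> x)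
     \<and> compact_space T \<and> Hausdorff_space T
     \<and> (\<forall>x \<in> topspace T. connected_component_of_set T x = {x})"

definition quotient_top :: "'a topology \<Rightarrow> ('a \<Rightarrow> 'c) \<Rightarrow> 'c set \<Rightarrow> 'c topology" where
  "quotient_top Tp f S = topology (\<lambda>V. V \<subseteq> S \<and> openin Tp {z \<in> topspace Tp. f z \<in> V})"

definition ecard' :: "'a set \<Rightarrow> enat" where
  "ecard' S = (if finite S then enat (card S) else \<infinity>)"

definition top_gen_rank :: "('a, 'b) monoid_scheme \<Rightarrow> 'a topology \<Rightarrow> enat" where
  "top_gen_rank G T = (INF S \<in> {S. S \<subseteq> carrier G \<and> T closure_of (generate G S) = carrier G}. ecard' S)"

definition group_index :: "('a, 'b) monoid_scheme \<Rightarrow> 'a set \<Rightarrow> enat" where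
  "group_index G H = ecard' (rcosets\<^bsub>G\<^esub> H)"

definition centralizer_of :: "('a, 'b) monoid_scheme \<Rightarrow> 'a \<Rightarrow> 'a set" where
  "centralizer_of G g = {x \<in> carrier G. x \<otimes>\<^bsub>G\<^esub> g = g \<otimes>\<^bsub>G\<^esub> x}"

definition closed_normal_closure :: "('a, 'b) monoid_scheme \<Rightarrow> 'a topology \<Rightarrow> 'a \<Rightarrow> 'a set" where
  "closed_normal_closure G T g = \<Inter> {H. H \<lhd> G \<and> closedin T H \<and> g \<in> H}"

definition closed_commutator :: "('a, 'b) monoid_scheme \<Rightarrow> 'a topology \<Rightarrow> 'a set \<Rightarrow> 'a set" where
  "closed_commutator G T K = T closure_of (derived G K)"

end

theory Submission
  imports Defs
begin

lemma cont_mult_fun: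
  assumes "continuous_map (prod_topology T T) T (\<lambda>(x, y). x \<otimes>\<^bsub>G\<^esub> y)"
    and "continuous_map T T f" "continuous_map T T h"
  shows "continuous_map T T (\<lambda>y. f y \<otimes>\<^bsub>G\<^esub> h y)"
proof -
  have "continuous_map T T ((\<lambda>(x, y). x \<otimes>\<^bsub>G\<^esub> y) \<circ> (\<lambda>y. (f y, h y)))"
    by (intro continuous_map_compose[OF _ assms(1)] continuous_map_pairedI assms(2,3))
  then show ?thesis by (simp add: o_def)
qed

lemma (in group) closure_normal:
  assumes top: "topspace T = carrier G"
    and mc: "continuous_map (prod_topology T T) T (\<lambda>(x, y). x \<otimes>\<^bsub>G\<^esub> y)"
    and ic: "continuous_map T T (\<lambda>x. inv\<^bsub>G\<^esub> x)"
    and HN: "H \<lhd> G"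
  shows "(T closure_of H) \<lhd> G"
proof -
  have Hs: "subgroup H G" using HN by (simp add: normal_imp_subgroup)
  have Hc: "H \<subseteq> carrier G" using Hs subgroup.subset by blast
  let ?C = "T closure_of H"
  have Csub: "?C \<subseteq> carrier G" using closure_of_subset_topspace[of T H] top by simp
  have HC: "H \<subseteq> ?C" using closure_of_subset[of H T] Hc top by simp
  have sg: "subgroup ?C G"
  proof (rule subgroupI)
    show "?C \<subseteq> carrier G" by fact
    show "?C \<noteq> {}" using HC subgroup.one_closed[OF Hs] by blast
  next
    fix a assume a: "a \<in> ?C"
    have "(\<lambda>x. inv x) ` ?C \<subseteq> T closure_of ((\<lambda>x. inv x) ` H)"
      by (rule continuous_map_image_closure_subset[OF ic])
    also have "\<dots> \<subseteq> ?C"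
      by (rule closure_of_mono) (use Hs subgroup.m_inv_closed in auto)
    finally show "inv a \<in> ?C" using a by blast
  next
    fix a b assume a: "a \<in> ?C" and b: "b \<in> ?C"
    have "(a, b) \<in> (prod_topology T T) closure_of (H \<times> H)"
      using a b closure_of_Times[of T T H H] by simp
    then have "(\<lambda>(x, y). x \<otimes> y) (a, b) \<in> T closure_of ((\<lambda>(x, y). x \<otimes> y) ` (H \<times> H))"
      using continuous_map_image_closure_subset[OF mc] by blast
    also have "\<dots> \<subseteq> ?C"
      by (rule closure_of_mono) (use Hs subgroup.m_closed in auto)
    finally show "a \<otimes> b \<in> ?C" by simp
  qed
  show ?thesis unfolding normal_inv_iff
  proof (intro conjI sg ballI)
    fix x h assume x: "x \<in> carrier G" and h: "h \<in> ?C"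
    have cm: "continuous_map T T (\<lambda>y. x \<otimes> y \<otimes> inv x)"
      by (intro cont_mult_fun[OF mc] continuous_map_id[unfolded id_def]) (use x top in auto)
    have "(\<lambda>y. x \<otimes> y \<otimes> inv x) ` ?C \<subseteq> T closure_of ((\<lambda>y. x \<otimes> y \<otimes> inv x) ` H)"
      by (rule continuous_map_image_closure_subset[OF cm])
    also have "\<dots> \<subseteq> ?C"
      by (rule closure_of_mono) (use HN x normal_inv_iff in auto)
    finally show "x \<otimes> h \<otimes> inv x \<in> ?C" using h by blast
  qed
qed


lemma (in group) r_inv_assoc:
  "x \<in> carrier G \<Longrightarrow> z \<in> carrier G \<Longrightarrow> x \<otimes> (inv x \<otimes> z) = z"
  by (simp add: m_assoc[symmetric])

lemma (in group) l_inv_assoc: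
  "x \<in> carrier G \<Longrightarrow> z \<in> carrier G \<Longrightarrow> inv x \<otimes> (x \<otimes> z) = z"
  by (simp add: m_assoc[symmetric])

lemma ecard'_image_le: "ecard' (h ` A) \<le> ecard' A"
  unfolding ecard'_def by (auto simp: card_image_le)

lemma r_coset_carrier_indep: "r_coset (G\<lparr>carrier := K\<rparr>) C x = r_coset G C x"
  unfolding r_coset_def by simp

lemma quotient_top_open:
  assumes "\<And>z. z \<in> topspace Tp \<Longrightarrow> f z \<in> S"
  shows "openin (quotient_top Tp f S) = (\<lambda>V. V \<subseteq> S \<and> openin Tp {z \<in> topspace Tp. f z \<in> V})"
    and "topspace (quotient_top Tp f S) = S"
proof -
  let ?P = "\<lambda>V. V \<subseteq> S \<and> openin Tp {z \<in> topspace Tp. f z \<in> V}"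
  have i1: "?P (U \<inter> V)" if U: "?P U" and V: "?P V" for U V
  proof -
    have "{z \<in> topspace Tp. f z \<in> U \<inter> V} = {z \<in> topspace Tp. f z \<in> U} \<inter> {z \<in> topspace Tp. f z \<in> V}"
      by auto
    then show ?thesis using U V by (auto intro!: openin_Int)
  qed
  have i2: "?P (\<Union>\<K>)" if H: "\<forall>V\<in>\<K>. ?P V" for \<K>
  proof -
    have "{z \<in> topspace Tp. f z \<in> \<Union>\<K>} = \<Union>((\<lambda>V. {z \<in> topspace Tp. f z \<in> V}) ` \<K>)"
      by auto
    then show ?thesis using H by (auto intro!: openin_Union)
  qed
  have ist: "istopology ?P"
    unfolding istopology_def using i1 i2 by blast
  show op: "openin (quotient_top Tp f S) = (\<lambda>V. V \<subseteq> S \<and> openin Tp {z \<in> topspace Tp. f z \<in> V})"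
    unfolding quotient_top_def using ist by simp
  have "{z \<in> topspace Tp. f z \<in> S} = topspace Tp" using assms by auto
  then have "openin (quotient_top Tp f S) S" by (simp add: op)
  then show "topspace (quotient_top Tp f S) = S"
    using openin_subset[of "quotient_top Tp f S"] op
    by (metis (no_types, lifting) openin_topspace subset_antisym)
qed

lemma (in group) lemma3p1_aux:
  fixes T :: "'a topology" and g :: 'a
  assumes "profinite_group G T" and "g \<in> carrier G"
  defines "K \<equiv> closed_normal_closure G T g"
  defines "C \<equiv> closed_commutator G T K"
  defines "Q \<equiv> (G\<lparr>carrier := K\<rparr>) Mod C"
  shows "top_gen_rank Q (quotient_top (subtopology T K) (\<lambda>x. C #>\<^bsub>G\<^esub> x) (carrier Q))
           \<le> group_index G (centralizer_of G g <#>\<^bsub>G\<^esub> K)"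
proof -
  have grp: "group G" and top: "topspace T = carrier G"
    and mc: "continuous_map (prod_topology T T) T (\<lambda>(x, y). x \<otimes>\<^bsub>G\<^esub> y)"
    and ic: "continuous_map T T (\<lambda>x. inv\<^bsub>G\<^esub> x)"
    using assms(1) unfolding profinite_group_def by auto
  note gG = assms(2)
  let ?F = "{H. H \<lhd> G \<and> closedin T H \<and> g \<in> H}"
  have Fne: "carrier G \<in> ?F" using normal_self gG top closedin_topspace[of T] by auto
  have Kdef: "K = \<Inter>?F" unfolding K_def closed_normal_closure_def by simp
  have Ksg: "subgroup K G" unfolding Kdef
    by (rule subgroups_Inter) (use Fne normal_imp_subgroup in auto)
  have Knorm: "K \<lhd> G" unfolding normal_inv_iff
  proof (intro conjI Ksg ballI)
    fix x h assume "x \<in> carrier G" "h \<in> K"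
    then show "x \<otimes> h \<otimes> inv x \<in> K" unfolding Kdef using normal_inv_iff by auto
  qed
  have Kcl: "closedin T K" unfolding Kdef using Fne by (intro closedin_Inter) auto
  have gK: "g \<in> K" unfolding Kdef by auto
  have Kmin: "\<And>H. H \<lhd> G \<Longrightarrow> closedin T H \<Longrightarrow> g \<in> H \<Longrightarrow> K \<subseteq> H"
    unfolding Kdef by auto
  have KG: "K \<subseteq> carrier G" using Ksg subgroup.subset by blast
  define D where "D = derived G K"
  have Dnorm: "D \<lhd> G" unfolding D_def by (rule derived_is_normal[OF Knorm])
  have DK: "D \<subseteq> K" unfolding D_def by (rule derived_incl[OF subset_refl Ksg])
  have Cdef: "C = T closure_of D" unfolding C_def closed_commutator_def D_def by simp
  have Cnorm: "C \<lhd> G" unfolding Cdef by (rule closure_normal[OF top mc ic Dnorm])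
  have Csg: "subgroup C G" using Cnorm normal_imp_subgroup by blast
  have CK: "C \<subseteq> K" unfolding Cdef by (rule closure_of_minimal[OF DK Kcl])
  have DC: "D \<subseteq> C" unfolding Cdef using closure_of_subset[of D T] DK KG top by auto
  define GK where "GK = G\<lparr>carrier := K\<rparr>"
  have CnGK: "C \<lhd> GK" unfolding GK_def by (rule normal_restrict_supergroup[OF Ksg Cnorm CK])
  interpret N: normal C GK by (rule CnGK)
  have QGK: "Q = GK Mod C" unfolding Q_def GK_def ..
  have grpQ: "group Q" unfolding QGK by (rule N.factorgroup_is_group)
  define f where "f = (\<lambda>x. C #>\<^bsub>G\<^esub> x)"
  have fhom: "f \<in> hom GK Q"
    using N.r_coset_hom_Mod unfolding QGK f_def GK_def r_coset_carrier_indep .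
  interpret fh: group_hom GK Q f
    using fhom grpQ N.is_group by (simp add: group_hom_def group_hom_axioms_def)
  have carrQ: "carrier Q = f ` K"
    unfolding QGK carrier_FactGroup f_def GK_def r_coset_carrier_indep by simp
  define Z where "Z = centralizer_of G g"
  define H where "H = Z <#> K"
  define cj where "cj = (\<lambda>y. inv y \<otimes> g \<otimes> y)"
  define rep where "rep = (\<lambda>R. SOME x. x \<in> carrier G \<and> R = H #> x)"
  define S where "S = (\<lambda>R. f (cj (rep R))) ` (rcosets H)"
  have cjG: "\<And>y. y \<in> carrier G \<Longrightarrow> cj y \<in> carrier G" unfolding cj_def using gG by simp
  have Kconj: "\<And>x h. x \<in> carrier G \<Longrightarrow> h \<in> K \<Longrightarrow> x \<otimes> h \<otimes> inv x \<in> K"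
    using normal_inv_iff[THEN iffD1, OF Knorm] by blast
  have cjK: "cj y \<in> K" if y: "y \<in> carrier G" for y
  proof -
    have "inv y \<otimes> g \<otimes> inv (inv y) \<in> K" using Kconj[OF inv_closed[OF y] gK] .
    then show ?thesis unfolding cj_def using y by simp
  qed
  have ZG: "Z \<subseteq> carrier G" unfolding Z_def centralizer_of_def by auto
  have oneZ: "\<one> \<in> Z" unfolding Z_def centralizer_of_def using gG by simp
  have oneH: "\<one> \<in> H" unfolding H_def set_mult_def
  proof (rule UN_I[OF oneZ], rule UN_I[OF subgroup.one_closed[OF Ksg]])
    show "\<one> \<in> {\<one> \<otimes> \<one>}" by simp
  qed
  have key: "f (cj y) \<in> S" if y: "y \<in> carrier G" for y
  proof -
    have R: "H #> y \<in> rcosets H" unfolding RCOSETS_def using y by auto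
    have "\<exists>x. x \<in> carrier G \<and> H #> y = H #> x" using y by auto
    then have "rep (H #> y) \<in> carrier G \<and> H #> y = H #> rep (H #> y)"
      unfolding rep_def by (rule someI_ex)
    then have x: "rep (H #> y) \<in> carrier G" "H #> y = H #> rep (H #> y)" by auto
    define x where "x = rep (H #> y)"
    have "y \<in> H #> y" unfolding r_coset_def using oneH y by force
    moreover have hx: "H #> y = H #> x" using x(2) unfolding x_def .
    ultimately have "y \<in> H #> x" by (simp only: hx)
    then obtain c k where c: "c \<in> Z" and k: "k \<in> K" and yck: "y = c \<otimes> k \<otimes> x"
      unfolding r_coset_def H_def set_mult_def by auto
    have cG: "c \<in> carrier G" using c ZG by auto
    have kG: "k \<in> carrier G" using k KG by auto
    have xG: "x \<in> carrier G" using x(1) unfolding x_def .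
    have cg: "c \<otimes> g = g \<otimes> c" using c unfolding Z_def centralizer_of_def by simp
    have e1: "inv c \<otimes> g \<otimes> c = g"
    proof -
      have "inv c \<otimes> g \<otimes> c = inv c \<otimes> (g \<otimes> c)" using cG gG by (simp add: m_assoc)
      also have "\<dots> = inv c \<otimes> (c \<otimes> g)" using cg by simp
      also have "\<dots> = (inv c \<otimes> c) \<otimes> g" using cG gG by (simp only: m_assoc inv_closed)
      also have "\<dots> = g" using cG gG by simp
      finally show ?thesis .
    qed
    have cjy: "cj y = inv x \<otimes> (inv k \<otimes> g \<otimes> k) \<otimes> x"
    proof -
      have "cj y = inv x \<otimes> inv k \<otimes> (inv c \<otimes> g \<otimes> c) \<otimes> k \<otimes> x"
        unfolding cj_def yck using cG kG xG gG by (simp add: inv_mult_group m_assoc)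
      then show ?thesis using e1 cG kG xG gG by (simp add: m_assoc)
    qed
    have ik: "inv k \<in> K" using subgroup.m_inv_closed[OF Ksg k] by simp
    have in1: "inv k \<otimes> g \<otimes> inv (inv k) \<otimes> inv g \<in> (\<Union>h2\<in>K. {inv k \<otimes> h2 \<otimes> inv (inv k) \<otimes> inv h2})"
      by (rule UN_I[OF gK]) simp
    have "inv k \<otimes> g \<otimes> inv (inv k) \<otimes> inv g \<in> derived_set G K"
      by (rule UN_I[where B="\<lambda>h1. \<Union>h2\<in>K. {h1 \<otimes> h2 \<otimes> inv h1 \<otimes> inv h2}", OF ik]) (simp only: in1)
    then have "inv k \<otimes> g \<otimes> inv (inv k) \<otimes> inv g \<in> D" unfolding D_def derived_def by (rule generate.incl)
    then have comm: "inv k \<otimes> g \<otimes> inv (inv k) \<otimes> inv g \<in> C" by (rule subsetD[OF DC])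
    have "cj y \<otimes> inv (cj x) = inv x \<otimes> (inv k \<otimes> g \<otimes> inv (inv k) \<otimes> inv g) \<otimes> inv (inv x)"
      unfolding cjy using cG kG xG gG by (simp add: cj_def inv_mult_group m_assoc r_inv_assoc l_inv_assoc)
    also have "\<dots> \<in> C" using normal_inv_iff[THEN iffD1, OF Cnorm] comm inv_closed[OF xG] by blast
    finally have "cj y \<in> C #> cj x"
      using subgroup.rcos_module_rev[OF Csg grp cjG[OF xG] cjG[OF y]] by blast
    then have "f (cj y) = f (cj x)"
      unfolding f_def using repr_independence[OF _ cjG[OF xG] Csg] by simp
    then show ?thesis unfolding S_def x_def using R by blast
  qed
  define XX where "XX = cj ` carrier G"
  define NN where "NN = generate G XX"
  have XXG: "XX \<subseteq> carrier G" unfolding XX_def using cjG by auto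
  have XXK: "XX \<subseteq> K" unfolding XX_def using cjK by auto
  have NNK: "NN \<subseteq> K" unfolding NN_def by (rule generate_subgroup_incl[OF XXK Ksg])
  have NNnorm: "NN \<lhd> G" unfolding NN_def
  proof (rule normal_generateI[OF XXG])
    fix h z assume h: "h \<in> XX" and z: "z \<in> carrier G"
    then obtain y where y: "y \<in> carrier G" and hy: "h = cj y" unfolding XX_def by auto
    have e: "inv (y \<otimes> inv z) = z \<otimes> inv y" using y z by (simp add: inv_mult_group)
    have "z \<otimes> h \<otimes> inv z = cj (y \<otimes> inv z)"
      unfolding hy cj_def e using y z gG by (simp add: m_assoc)
    then show "z \<otimes> h \<otimes> inv z \<in> XX" unfolding XX_def using y z by auto
  qed
  have gNN: "g \<in> NN"
  proof -
    have "cj \<one> = g" unfolding cj_def using gG by simp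
    then have "g \<in> XX" unfolding XX_def by force
    then show ?thesis unfolding NN_def by (rule generate.incl)
  qed
  have NNG: "NN \<subseteq> carrier G" using NNK KG by auto
  have Kcl_NN: "K \<subseteq> T closure_of NN"
  proof (rule Kmin)
    show "T closure_of NN \<lhd> G" by (rule closure_normal[OF top mc ic NNnorm])
    show "closedin T (T closure_of NN)" by simp
    show "g \<in> T closure_of NN" using closure_of_subset[of NN T] NNG top gNN by auto
  qed
  have SQ: "S \<subseteq> carrier Q"
  proof
    fix s assume "s \<in> S"
    then obtain R where "R \<in> rcosets H" "s = f (cj (rep R))" unfolding S_def by auto
    moreover have "rep R \<in> carrier G"
    proof -
      from \<open>R \<in> rcosets H\<close> have "\<exists>x. x \<in> carrier G \<and> R = H #> x" unfolding RCOSETS_def by auto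
      then show ?thesis unfolding rep_def by (metis (mono_tags, lifting) someI_ex)
    qed
    ultimately show "s \<in> carrier Q" unfolding carrQ using cjK by auto
  qed
  have fNN: "f n \<in> generate Q S" if n: "n \<in> NN" for n
    using n unfolding NN_def
  proof (induction rule: generate.induct)
    case one
    have "f \<one> = C" unfolding f_def using Csg subgroup.subset coset_mult_one by blast
    then show ?case using generate.one[of Q S] unfolding QGK by simp
  next
    case (incl h)
    then show ?case using key unfolding XX_def by (auto intro: generate.incl)
  next
    case (inv h)
    then obtain y where y: "y \<in> carrier G" and hy: "h = cj y" unfolding XX_def by auto
    have hK: "h \<in> K" using hy cjK y by simp
    have "f (inv h) = f (inv\<^bsub>GK\<^esub> h)" unfolding GK_def using m_inv_consistent[OF Ksg hK] by simp
    also have "\<dots> = inv\<^bsub>Q\<^esub> f h" using fh.hom_inv hK unfolding GK_def by simp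
    finally show ?case using key[OF y] hy by (simp add: generate.inv)
  next
    case (eng h1 h2)
    have "h1 \<in> K" "h2 \<in> K" using eng.hyps NNK unfolding NN_def by auto
    then have "f (h1 \<otimes> h2) = f h1 \<otimes>\<^bsub>Q\<^esub> f h2"
      using fh.hom_mult[of h1 h2] unfolding GK_def by simp
    then show ?case using eng.IH by (simp add: generate.eng)
  qed
  define Y where "Y = quotient_top (subtopology T K) f (carrier Q)"
  have tsK: "topspace (subtopology T K) = K" using KG top by auto
  have fmap: "\<And>z. z \<in> topspace (subtopology T K) \<Longrightarrow> f z \<in> carrier Q"
    using tsK carrQ by auto
  have Yopen: "openin Y = (\<lambda>V. V \<subseteq> carrier Q \<and> openin (subtopology T K) {z \<in> topspace (subtopology T K). f z \<in> V})"
    unfolding Y_def by (rule quotient_top_open(1)) (rule fmap)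
  have Ytop: "topspace Y = carrier Q"
    unfolding Y_def by (rule quotient_top_open(2)) (rule fmap)
  have clos: "Y closure_of (generate Q S) = carrier Q"
  proof (rule subset_antisym)
    show "Y closure_of generate Q S \<subseteq> carrier Q" using closure_of_subset_topspace[of Y "generate Q S"] Ytop by simp
  next
    show "carrier Q \<subseteq> Y closure_of generate Q S"
    proof
      fix q assume q: "q \<in> carrier Q"
      then obtain k where k: "k \<in> K" and qk: "q = f k" using carrQ by auto
      show "q \<in> Y closure_of generate Q S"
        unfolding in_closure_of Ytop
      proof (intro conjI q allI impI)
        fix U assume U: "q \<in> U \<and> openin Y U"
        then have "openin Y U" by simp
        then have "openin (subtopology T K) {z \<in> topspace (subtopology T K). f z \<in> U}"
          unfolding Yopen by (rule conjunct2)
        then have Uo: "openin (subtopology T K) {z \<in> K. f z \<in> U}"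
          unfolding tsK .
        then obtain U' where U': "openin T U'" "{z \<in> K. f z \<in> U} = U' \<inter> K"
          unfolding openin_subtopology by blast
        have "k \<in> U'" using U' k U qk by auto
        moreover have "k \<in> T closure_of NN" using Kcl_NN k by (rule subsetD)
        ultimately obtain n where n: "n \<in> NN" "n \<in> U'"
          using U'(1) unfolding in_closure_of by blast
        then have "f n \<in> U" using U' NNK by auto
        then show "\<exists>y. y \<in> generate Q S \<and> y \<in> U" using fNN n by blast
      qed
    qed
  qed
  have "top_gen_rank Q Y \<le> ecard' S"
    unfolding top_gen_rank_def using SQ clos by (intro INF_lower) auto
  also have "\<dots> \<le> ecard' (rcosets H)" unfolding S_def by (rule ecard'_image_le)
  finally show ?thesis unfolding Y_def f_def group_index_def H_def Z_def .
qed


theorem lemma3p1: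
  fixes G :: "('a, 'b) monoid_scheme" and T :: "'a topology" and g :: 'a
  assumes "profinite_group G T" and "g \<in> carrier G"
  defines "K \<equiv> closed_normal_closure G T g"
  defines "C \<equiv> closed_commutator G T K"
  defines "Q \<equiv> (G\<lparr>carrier := K\<rparr>) Mod C"
  shows "top_gen_rank Q (quotient_top (subtopology T K) (\<lambda>x. C #>\<^bsub>G\<^esub> x) (carrier Q))
           \<le> group_index G (centralizer_of G g <#>\<^bsub>G\<^esub> K)"
proof -
  have "group G" using assms(1) unfolding profinite_group_def by simp
  from group.lemma3p1_aux[OF this assms(1,2)] show ?thesis
    unfolding K_def C_def Q_def .
qed

end
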